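(* Let $\mathcal{B}^*$ be the three-receiver unicast index coding problem described in the context, with equivalent single unicast side information graph $G^*$ on $[12]$ and underlying undirected graph $G^*_u$. For any $S \subseteq [12]$, the optimal broadcast rate among index codes with locality $1$ for the sub-problem $\mathcal{B}^*_S$ satisfies $$\beta^*_{\mathcal{B}^*_S}(1) = \bar{\chi}(G^*_{S,u}),$$ where $\bar{\chi}$ denotes the clique cover number and $G^*_{S,u}$ is the subgraph of $G^*_u$ induced by $S$.
   Context: Index coding model. A unicast index coding problem has $n$ receivers $u_1,\dots,u_n$ and $N$ messages $\mathbf{x}_1,\dots,\mathbf{x}_N$, each a vector in $\mathcal{A}^m$ for a finite alphabet $\mathcal{A}$ and a positive integer $m$ (the message length; all messages have the same length). Receiver $u_i$ demands $\mathbf{x}_j$, $j\in W_i$, and knows $\mathbf{x}_j$, $j\in K_i$, as side information, where $W_i,K_i\subseteq[N]$, $W_i\cap K_i=\emptyset$, the $W_i$ are pairwise disjoint and every message is demanded by exactly one receiver. An index code consists of an encoder mapping $(\mathbf{x}_1,\dots,\mathbf{x}_N)$ to a codeword $\mathbf{c}\in\mathcal{A}^\ell$, subsets $R_i\subseteq[\ell]$ (receiver $u_i$ observes only $\mathbf{c}_{R_i}=(c_k)_{k\in R_i}$), and decoders at each $u_i$ mapping $(\mathbf{c}_{R_i},\mathbf{x}_{K_i})$ to $\mathbf{x}_{W_i}$. It is valid if every receiver decodes its demand correctly for all message values. Its broadcast rate is $\beta=\ell/m$. The locality at $u_i$ is $r_i=|R_i|/(m|W_i|)$ and the locality of the code is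 $r=\max_i r_i$ (receivers with no demand impose no constraint). For a problem $\mathcal{B}$, $\beta^*_{\mathcal{B}}(r)$ is the infimum of broadcast rates of all valid index codes, over all message lengths $m\ge1$, with locality at most $r$. The problem $\mathcal{B}^*$: three receivers $u_1,u_2,u_3$ and 12 messages $\mathbf{x}_1,\dots,\mathbf{x}_{12}$ with $W_1=\{1,2,3,4\}$, $W_2=\{5,6,7,8\}$, $W_3=\{9,10,11,12\}$, $K_1=\{5,6,9,10\}$, $K_2=\{1,2,9,11\}$, $K_3=\{1,3,5,7\}$. For $S\subseteq[12]$, $\mathcal{B}^*_S$ is the sub-problem with receivers $u_1,u_2,u_3$, messages $\mathbf{x}_j$, $j\in S$, demand sets $W_i\cap S$ and side information sets $K_i\cap S$. Graphs. $G^*$ is the directed graph on vertex set $[12]$ with a directed edge $(a,b)$ if and only if $b\in K_i$, where $i$ is the unique receiver with $a\in W_i$. $G^*_u$ is the undirected graph on $[12]$ in which $\{a,b\}$ is an edge if and only if both $(a,b)$ and $(b,a)$ are edges of $G^*$. For $S\subseteq[12]$, $G^*_S$ and $G^*_{S,u}$ denote the subgraphs of $G^*$ and $G^*_u$ induced by $S$. *)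

theory Defs
  imports Complex_Main "HOL-Library.Disjoint_Sets"
begin

definition receivers :: "nat set" where
  "receivers = {1, 2, 3}"

definition W :: "nat \<Rightarrow> nat set" where
  "W i = (if i = 1 then {1,2,3,4} else if i = 2 then {5,6,7,8}
          else if i = 3 then {9,10,11,12} else {})"

definition K :: "nat \<Rightarrow> nat set" where
  "K i = (if i = 1 then {5,6,9,10} else if i = 2 then {1,2,9,11}
          else if i = 3 then {1,3,5,7} else {})"

text \<open>A message tuple for B*_S with message length m: x j k is the k-th symbol
  (k < m) of message j (j \<in> S); all other entries are fixed to undefined,
  so that such functions are in bijection with A^(S \<times> [m]).\<close>

definition msgs :: "nat set \<Rightarrow> nat \<Rightarrow> (nat \<Rightarrow> nat \<Rightarrow> 'a) set" where
  "msgs S m = {x. \<forall>j k. \<not> (j \<in> S \<and> k < m) \<longrightarrow> x j k = undefined}"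

definition restr_msgs :: "(nat \<Rightarrow> nat \<Rightarrow> 'a) \<Rightarrow> nat set \<Rightarrow> nat \<Rightarrow> nat \<Rightarrow> nat \<Rightarrow> 'a" where
  "restr_msgs x A m = (\<lambda>j k. if j \<in> A \<and> k < m then x j k else undefined)"

definition restr_cw :: "(nat \<Rightarrow> 'a) \<Rightarrow> nat set \<Rightarrow> nat \<Rightarrow> 'a" where
  "restr_cw c R = (\<lambda>k. if k \<in> R then c k else undefined)"

definition valid_code ::
  "nat set \<Rightarrow> nat \<Rightarrow> nat \<Rightarrow> ((nat \<Rightarrow> nat \<Rightarrow> 'a) \<Rightarrow> (nat \<Rightarrow> 'a)) \<Rightarrow> (nat \<Rightarrow> nat set)
     \<Rightarrow> (nat \<Rightarrow> (nat \<Rightarrow> 'a) \<Rightarrow> (nat \<Rightarrow> nat \<Rightarrow> 'a) \<Rightarrow> (nat \<Rightarrow> nat \<Rightarrow> 'a)) \<Rightarrow> bool" where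
  "valid_code S m l E R D \<longleftrightarrow>
     (\<forall>i\<in>receivers. R i \<subseteq> {..<l}) \<and>
     (\<forall>x\<in>msgs S m. \<forall>i\<in>receivers. \<forall>j\<in>W i \<inter> S. \<forall>k<m.
        D i (restr_cw (E x) (R i)) (restr_msgs x (K i \<inter> S) m) j k = x j k)"

definition locality_le :: "nat set \<Rightarrow> nat \<Rightarrow> (nat \<Rightarrow> nat set) \<Rightarrow> real \<Rightarrow> bool" where
  "locality_le S m R r \<longleftrightarrow>
     (\<forall>i\<in>receivers. W i \<inter> S \<noteq> {} \<longrightarrow>
        real (card (R i)) / (real m * real (card (W i \<inter> S))) \<le> r)"

definition beta_star :: "'a itself \<Rightarrow> nat set \<Rightarrow> real \<Rightarrow> real" where
  "beta_star (_ :: 'a itself) S r = Inf {real l / real m | l m. m \<ge> 1 \<and>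
      (\<exists>(E :: (nat \<Rightarrow> nat \<Rightarrow> 'a) \<Rightarrow> (nat \<Rightarrow> 'a)) R D.
          valid_code S m l E R D \<and> locality_le S m R r)}"

definition G_edge :: "nat \<Rightarrow> nat \<Rightarrow> bool" where
  "G_edge a b \<longleftrightarrow> (\<exists>i\<in>receivers. a \<in> W i \<and> b \<in> K i)"

definition Gu_edge :: "nat \<Rightarrow> nat \<Rightarrow> bool" where
  "Gu_edge a b \<longleftrightarrow> G_edge a b \<and> G_edge b a"

definition is_clique_in :: "nat set \<Rightarrow> nat set \<Rightarrow> bool" where
  "is_clique_in S C \<longleftrightarrow> C \<subseteq> S \<and> (\<forall>a\<in>C. \<forall>b\<in>C. a \<noteq> b \<longrightarrow> Gu_edge a b)"

definition clique_cover_number :: "nat set \<Rightarrow> nat" where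
  "clique_cover_number S =
     (LEAST k. \<exists>P. partition_on S P \<and> (\<forall>C\<in>P. is_clique_in S C) \<and> finite P \<and> card P = k)"

end

theory Submission
  imports Defs "HOL-Library.FuncSet"
begin


definition Zs :: "nat set \<Rightarrow> nat \<Rightarrow> (nat \<Rightarrow> nat \<Rightarrow> 'a) \<Rightarrow> nat set \<Rightarrow> (nat \<Rightarrow> nat \<Rightarrow> 'a) set" where
  "Zs S m x V = {z \<in> msgs S m. \<forall>j k. j \<notin> V \<longrightarrow> z j k = x j k}"

lemma W_fin: "finite (W i)"
  by (simp add: W_def)

lemma WK_disj: "i \<in> receivers \<Longrightarrow> W i \<inter> K i = {}"
  by (auto simp: receivers_def W_def K_def)

lemma WW_disj: "i \<in> receivers \<Longrightarrow> j \<in> receivers \<Longrightarrow> i \<noteq> j \<Longrightarrow> W i \<inter> W j = {}"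
  by (auto simp: receivers_def W_def)

lemma restr_cw_PiE: "restr_cw c A \<in> (\<Pi>\<^sub>E p\<in>A. (UNIV :: 'a set))"
  by (auto simp: restr_cw_def PiE_def extensional_def)

lemma Zs_card:
  fixes x :: "nat \<Rightarrow> nat \<Rightarrow> 'a::finite"
  assumes "finite V" "V \<subseteq> S" "x \<in> msgs S m" "finite (Zs S m x V)"
  shows "card (UNIV :: 'a set) ^ (m * card V) \<le> card (Zs S m x V)"
proof -
  let ?F = "\<Pi>\<^sub>E p \<in> V \<times> {..<m}. (UNIV :: 'a set)"
  define emb where "emb = (\<lambda>f j k. if j \<in> V \<and> k < m then f (j, k) else x j k)"
  have inj: "inj_on emb ?F"
  proof (rule inj_onI)
    fix f g assume f: "f \<in> ?F" and g: "g \<in> ?F" and e: "emb f = emb g"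
    show "f = g"
    proof (rule PiE_ext[OF f g])
      fix p assume p: "p \<in> V \<times> {..<m}"
      obtain j k where pjk: "p = (j, k)" by force
      have "emb f j k = emb g j k" using e by simp
      then show "f p = g p" using p pjk by (simp add: emb_def)
    qed
  qed
  have sub: "emb ` ?F \<subseteq> Zs S m x V"
    using assms(2,3) by (auto simp: emb_def Zs_def msgs_def)
  have "card ?F \<le> card (Zs S m x V)"
    by (rule card_inj_on_le[OF inj sub assms(4)])
  moreover have "card ?F = card (UNIV :: 'a set) ^ (m * card V)"
    using assms(1) by (simp add: card_PiE card_cartesian_product mult.commute)
  ultimately show ?thesis by simp
qed

lemma decode_inj:
  assumes v: "valid_code S m l E R D" and i: "i \<in> receivers"
    and z: "z \<in> msgs S m" and z': "z' \<in> msgs S m"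
    and agree: "\<forall>j k. j \<notin> W i \<longrightarrow> z j k = z' j k"
    and c: "restr_cw (E z) (R i) = restr_cw (E z') (R i)"
  shows "z = z'"
proof -
  have sm: "restr_msgs z (K i \<inter> S) m = restr_msgs z' (K i \<inter> S) m"
    using agree WK_disj[OF i] by (auto simp: restr_msgs_def fun_eq_iff)
  have dec: "\<And>y j k. y \<in> msgs S m \<Longrightarrow> j \<in> W i \<inter> S \<Longrightarrow> k < m \<Longrightarrow>
      D i (restr_cw (E y) (R i)) (restr_msgs y (K i \<inter> S) m) j k = y j k"
    using v i unfolding valid_code_def by blast
  show ?thesis
  proof (intro ext)
    fix j k
    show "z j k = z' j k"
    proof (cases "j \<in> W i")
      case False then show ?thesis using agree by blast
    next
      case True
      show ?thesis
      proof (cases "j \<in> S \<and> k < m")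
        case True
        then show ?thesis using dec[OF z, of j k] dec[OF z', of j k] c sm \<open>j \<in> W i\<close> by simp
      next
        case False
        then show ?thesis using z z' by (simp add: msgs_def)
      qed
    qed
  qed
qed

lemma coreA:
  fixes E :: "(nat \<Rightarrow> nat \<Rightarrow> 'a::finite) \<Rightarrow> nat \<Rightarrow> 'a"
  assumes v: "valid_code S m l E R D" and i: "i \<in> receivers"
    and x: "x \<in> msgs S m" and V: "V \<subseteq> W i \<inter> S" and T: "T \<subseteq> R i"
    and const: "\<forall>z\<in>Zs S m x V. \<forall>p\<in>T. E z p = E x p"
    and n2: "card (UNIV :: 'a set) \<ge> 2"
  shows "m * card V + card T \<le> card (R i)"
proof -
  let ?n = "card (UNIV :: 'a set)"
  define g where "g = (\<lambda>z. restr_cw (E z) (R i - T))"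
  have Rfin: "finite (R i)" using v i unfolding valid_code_def
    by (meson finite_lessThan finite_subset)
  have Tfin: "finite T" using T Rfin finite_subset by blast
  have Vfin: "finite V" using V W_fin finite_subset by blast
  have inj: "inj_on g (Zs S m x V)"
  proof (rule inj_onI)
    fix z z' assume zZ: "z \<in> Zs S m x V" and z'Z: "z' \<in> Zs S m x V" and e: "g z = g z'"
    have "restr_cw (E z) (R i) = restr_cw (E z') (R i)"
    proof
      fix p show "restr_cw (E z) (R i) p = restr_cw (E z') (R i) p"
      proof (cases "p \<in> T")
        case True then show ?thesis using const zZ z'Z by (simp add: restr_cw_def)
      next
        case False
        then show ?thesis using fun_cong[OF e, of p] by (simp add: g_def restr_cw_def)
      qed
    qed
    moreover have "\<forall>j k. j \<notin> W i \<longrightarrow> z j k = z' j k"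
    proof (intro allI impI)
      fix j k assume "j \<notin> W i"
      then have "j \<notin> V" using V by blast
      then show "z j k = z' j k" using zZ z'Z by (simp add: Zs_def)
    qed
    ultimately show "z = z'" using decode_inj[OF v i] zZ z'Z by (auto simp: Zs_def)
  qed
  have sub: "g ` Zs S m x V \<subseteq> (\<Pi>\<^sub>E p\<in>R i - T. (UNIV :: 'a set))"
    unfolding g_def by (intro image_subsetI restr_cw_PiE)
  have finB: "finite (\<Pi>\<^sub>E p\<in>R i - T. (UNIV :: 'a set))"
    using Rfin by (simp add: finite_PiE)
  have finZ: "finite (Zs S m x V)"
    using finite_imageD[OF finite_subset[OF sub finB] inj] .
  have "card (Zs S m x V) \<le> card (\<Pi>\<^sub>E p\<in>R i - T. (UNIV :: 'a set))"
    by (rule card_inj_on_le[OF inj sub finB])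
  also have "\<dots> = ?n ^ card (R i - T)" using Rfin by (simp add: card_PiE)
  finally have "?n ^ (m * card V) \<le> ?n ^ card (R i - T)"
    using Zs_card[OF Vfin _ x finZ] V by (meson le_inf_iff order_trans)
  then have "m * card V \<le> card (R i - T)"
    using n2 by (simp add: power_le_imp_le_exp)
  moreover have "card (R i - T) = card (R i) - card T"
    using T Tfin by (simp add: card_Diff_subset)
  moreover have "card T \<le> card (R i)" using T Rfin by (simp add: card_mono)
  ultimately show ?thesis by linarith
qed

lemma coreB:
  fixes E :: "(nat \<Rightarrow> nat \<Rightarrow> 'a::finite) \<Rightarrow> nat \<Rightarrow> 'a"
  assumes v: "valid_code S m l E R D" and i: "i \<in> receivers"
    and loc: "card (R i) \<le> m * card (W i \<inter> S)"
    and x: "x \<in> msgs S m" and y: "y \<in> msgs S m"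
    and agree: "\<forall>j\<in>W i \<union> K i. \<forall>k. x j k = y j k"
    and p: "p \<in> R i"
  shows "E x p = E y p"
proof -
  let ?n = "card (UNIV :: 'a set)"
  let ?Z = "Zs S m x (W i \<inter> S)"
  let ?B = "\<Pi>\<^sub>E p\<in>R i. (UNIV :: 'a set)"
  define g where "g = (\<lambda>z. restr_cw (E z) (R i))"
  have Rfin: "finite (R i)" using v i unfolding valid_code_def
    by (meson finite_lessThan finite_subset)
  have inj: "inj_on g ?Z"
  proof (rule inj_onI)
    fix z z' assume zZ: "z \<in> ?Z" and z'Z: "z' \<in> ?Z" and e: "g z = g z'"
    have "\<forall>j k. j \<notin> W i \<longrightarrow> z j k = z' j k"
      using zZ z'Z by (auto simp: Zs_def)
    then show "z = z'"
      using decode_inj[OF v i _ _ _ e[unfolded g_def]] zZ z'Z by (simp add: Zs_def)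
  qed
  have sub: "g ` ?Z \<subseteq> ?B" unfolding g_def by (intro image_subsetI restr_cw_PiE)
  have finB: "finite ?B" using Rfin by (simp add: finite_PiE)
  have finZ: "finite ?Z" using finite_imageD[OF finite_subset[OF sub finB] inj] .
  have "?n ^ (m * card (W i \<inter> S)) \<le> card ?Z"
    using Zs_card[OF _ _ x finZ] W_fin by simp
  moreover have "?n ^ card (R i) \<le> ?n ^ (m * card (W i \<inter> S))"
    using loc by (intro power_increasing) (auto simp: Suc_le_eq finite_UNIV_card_ge_0)
  moreover have "card ?B = ?n ^ card (R i)" using Rfin by (simp add: card_PiE)
  moreover have "card (g ` ?Z) = card ?Z" using card_image[OF inj] .
  ultimately have "card ?B \<le> card (g ` ?Z)" by linarith
  then have eqB: "g ` ?Z = ?B" using card_seteq[OF finB sub] by blast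
  have "g y \<in> ?B" by (simp add: g_def restr_cw_PiE)
  then obtain z where zZ: "z \<in> ?Z" and gz: "g z = g y" using eqB by (metis imageE)
  have dec: "\<And>y j k. y \<in> msgs S m \<Longrightarrow> j \<in> W i \<inter> S \<Longrightarrow> k < m \<Longrightarrow>
      D i (restr_cw (E y) (R i)) (restr_msgs y (K i \<inter> S) m) j k = y j k"
    using v i unfolding valid_code_def by blast
  have sm1: "restr_msgs z (K i \<inter> S) m = restr_msgs x (K i \<inter> S) m"
    using zZ WK_disj[OF i] by (auto simp: Zs_def restr_msgs_def fun_eq_iff)
  have sm2: "restr_msgs x (K i \<inter> S) m = restr_msgs y (K i \<inter> S) m"
    using agree by (auto simp: restr_msgs_def fun_eq_iff)
  have zx: "z = x"
  proof (intro ext)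
    fix j k
    show "z j k = x j k"
    proof (cases "j \<in> W i \<inter> S \<and> k < m")
      case True
      have "z j k = D i (g z) (restr_msgs z (K i \<inter> S) m) j k"
        using dec[of z j k] True zZ by (simp add: Zs_def g_def)
      also have "\<dots> = D i (g y) (restr_msgs y (K i \<inter> S) m) j k"
        using gz sm1 sm2 by simp
      also have "\<dots> = y j k" using dec[OF y, of j k] True by (simp add: g_def)
      also have "\<dots> = x j k" using agree True by auto
      finally show ?thesis .
    next
      case False
      then show ?thesis using zZ x by (auto simp: Zs_def msgs_def)
    qed
  qed
  have "g x = g y" using gz zx by simp
  then show ?thesis using p by (simp add: g_def restr_cw_def fun_eq_iff) (metis (mono_tags))
qed



definition Rp :: "nat set \<Rightarrow> (nat \<Rightarrow> nat set) \<Rightarrow> nat \<Rightarrow> nat set" where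
  "Rp S R i = (if W i \<inter> S = {} then {} else R i)"

lemma loc_card:
  assumes "locality_le S m R 1" "i \<in> receivers" "W i \<inter> S \<noteq> {}" "m \<ge> 1"
  shows "card (R i) \<le> m * card (W i \<inter> S)"
proof -
  have "card (W i \<inter> S) > 0" using assms(3) W_fin
    by (simp add: card_gt_0_iff)
  then have pos: "real m * real (card (W i \<inter> S)) > 0" using assms(4) by simp
  have "real (card (R i)) / (real m * real (card (W i \<inter> S))) \<le> 1"
    using assms(1-3) unfolding locality_le_def by blast
  then have "real (card (R i)) \<le> real m * real (card (W i \<inter> S))"
    using pos by (simp add: divide_le_eq)
  then show ?thesis by (metis of_nat_le_iff of_nat_mult)
qed

lemma x0_msgs: "(\<lambda>j k. undefined) \<in> msgs S m"
  by (simp add: msgs_def)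

lemma Rp_card:
  fixes E :: "(nat \<Rightarrow> nat \<Rightarrow> 'a::finite) \<Rightarrow> nat \<Rightarrow> 'a"
  assumes v: "valid_code S m l E R D" and loc: "locality_le S m R 1" and m: "m \<ge> 1"
    and n2: "card (UNIV :: 'a set) \<ge> 2" and i: "i \<in> receivers"
  shows "card (Rp S R i) = m * card (W i \<inter> S)"
proof (cases "W i \<inter> S = {}")
  case True then show ?thesis by (simp add: Rp_def)
next
  case False
  have "m * card (W i \<inter> S) + card {} \<le> card (R i)"
    using coreA[OF v i x0_msgs, where V="W i \<inter> S" and T="{}"] n2 by auto
  then show ?thesis using loc_card[OF loc i False m] False by (simp add: Rp_def)
qed

lemma Rp_pair:
  fixes E :: "(nat \<Rightarrow> nat \<Rightarrow> 'a::finite) \<Rightarrow> nat \<Rightarrow> 'a"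
  assumes v: "valid_code S m l E R D" and loc: "locality_le S m R 1" and m: "m \<ge> 1"
    and n2: "card (UNIV :: 'a set) \<ge> 2" and i: "i \<in> receivers"
    and X: "X \<subseteq> receivers" "i \<notin> X"
  shows "card (Rp S R i \<inter> \<Union>(Rp S R ` X)) \<le> m * card (W i \<inter> S \<inter> \<Union>(K ` X))"
proof (cases "W i \<inter> S = {}")
  case True then show ?thesis by (simp add: Rp_def)
next
  case False
  define x0 where "x0 = (\<lambda>(j::nat) (k::nat). undefined :: 'a)"
  have x0: "x0 \<in> msgs S m" by (simp add: x0_def msgs_def)
  define V where "V = W i \<inter> S - \<Union>(K ` X)"
  define T where "T = R i \<inter> \<Union>(Rp S R ` X)"
  have const: "\<forall>z\<in>Zs S m x0 V. \<forall>p\<in>T. E z p = E x0 p"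
  proof (intro ballI)
    fix z p assume z: "z \<in> Zs S m x0 V" and p: "p \<in> T"
    then obtain j where j: "j \<in> X" "p \<in> Rp S R j" by (auto simp: T_def)
    have jr: "j \<in> receivers" using j X by auto
    have ij: "i \<noteq> j" using j X by auto
    have ne: "W j \<inter> S \<noteq> {}" using j by (auto simp: Rp_def split: if_splits)
    have pR: "p \<in> R j" using j ne by (simp add: Rp_def)
    have agree: "\<forall>j'\<in>W j \<union> K j. \<forall>k. z j' k = x0 j' k"
    proof (intro ballI allI)
      fix j' k assume j': "j' \<in> W j \<union> K j"
      have "j' \<notin> V"
        using j' WW_disj[OF i jr ij] j(1) by (auto simp: V_def)
      then show "z j' k = x0 j' k" using z by (simp add: Zs_def)
    qed
    show "E z p = E x0 p"
      by (rule coreB[OF v jr loc_card[OF loc jr ne m] _ x0 agree pR]) (use z in \<open>simp add: Zs_def\<close>)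
  qed
  have A: "m * card V + card T \<le> card (R i)"
    by (rule coreA[OF v i x0 _ _ const n2]) (auto simp: V_def T_def)
  have B: "card (R i) \<le> m * card (W i \<inter> S)" using loc_card[OF loc i False m] .
  have fW: "finite (W i \<inter> S)" using W_fin by simp
  have cV: "card V = card (W i \<inter> S) - card (W i \<inter> S \<inter> \<Union>(K ` X))"
    unfolding V_def by (rule card_Diff_subset_Int) (use fW in simp)
  have le: "card (W i \<inter> S \<inter> \<Union>(K ` X)) \<le> card (W i \<inter> S)"
    using fW by (intro card_mono) auto
  have "m * card V = m * card (W i \<inter> S) - m * card (W i \<inter> S \<inter> \<Union>(K ` X))"
    using cV by (simp add: diff_mult_distrib2)
  moreover have "m * card (W i \<inter> S \<inter> \<Union>(K ` X)) \<le> m * card (W i \<inter> S)"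
    using le by simp
  ultimately have "card T \<le> m * card (W i \<inter> S \<inter> \<Union>(K ` X))" using A B by linarith
  then show ?thesis using False by (simp add: T_def Rp_def)
qed

lemma card_ins_int: "finite A \<Longrightarrow> a \<notin> A \<Longrightarrow> card (insert a A \<inter> S) = of_bool (a \<in> S) + card (A \<inter> S)"
  by (auto simp: Int_insert_left card_insert_if)

lemma ins_int_ne: "(insert a A \<inter> S \<noteq> {}) = (a \<in> S \<or> A \<inter> S \<noteq> {})"
  by auto

lemma len_filter_sum: "length (filter f xs) = sum_list (map (\<lambda>x. of_bool (f x)) xs)"
  by (induction xs) auto

lemma cover:
  assumes "S \<subseteq> \<Union>(set Ps)" "\<forall>C\<in>set Ps. \<forall>D\<in>set Ps. C \<inter> D = {} \<or> C = D"
    "\<forall>C\<in>set Ps. \<forall>a\<in>C. \<forall>b\<in>C. a \<noteq> b \<longrightarrow> Gu_edge a b"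
  shows "clique_cover_number S \<le> sum_list (map (\<lambda>C. of_bool (C \<inter> S \<noteq> {})) Ps)"
proof -
  define P where "P = (\<lambda>C. C \<inter> S) ` set (filter (\<lambda>C. C \<inter> S \<noteq> {}) Ps)"
  have part: "partition_on S P"
    unfolding partition_on_def
  proof (intro conjI)
    show "\<Union>P = S" using assms(1) by (auto simp: P_def)
    show "disjoint P"
      unfolding P_def
    proof (rule pairwise_imageI)
      fix C D assume "C \<in> set (filter (\<lambda>C. C \<inter> S \<noteq> {}) Ps)" "D \<in> set (filter (\<lambda>C. C \<inter> S \<noteq> {}) Ps)"
        "C \<inter> S \<noteq> D \<inter> S"
      then show "disjnt (C \<inter> S) (D \<inter> S)" using assms(2)
        by (auto simp: disjnt_def)
    qed
    show "{} \<notin> P" by (auto simp: P_def)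
  qed
  have cl: "\<forall>C\<in>P. is_clique_in S C" using assms(3) by (auto simp: P_def is_clique_in_def)
  have fin: "finite P" by (simp add: P_def)
  have "clique_cover_number S \<le> card P"
    unfolding clique_cover_number_def by (rule Least_le) (use part cl fin in blast)
  also have "\<dots> \<le> card (set (filter (\<lambda>C. C \<inter> S \<noteq> {}) Ps))"
    unfolding P_def by (rule card_image_le) simp
  also have "\<dots> \<le> length (filter (\<lambda>C. C \<inter> S \<noteq> {}) Ps)" by (rule card_length)
  finally show ?thesis by (simp add: len_filter_sum)
qed

lemma card3:
  assumes "finite A" "finite B" "finite C"
  shows "card (A \<union> B \<union> C) + card (A \<inter> B) + card (A \<inter> C) + card (B \<inter> C)
       = card A + card B + card C + card (A \<inter> B \<inter> C)"
proof -
  have 1: "card A + card B = card (A \<union> B) + card (A \<inter> B)" using card_Un_Int assms by blast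
  have 2: "card (A \<union> B) + card C = card (A \<union> B \<union> C) + card ((A \<union> B) \<inter> C)"
    using card_Un_Int assms by (meson finite_UnI)
  have e: "(A \<union> B) \<inter> C = (A \<inter> C) \<union> (B \<inter> C)" by blast
  have e2: "(A \<inter> C) \<inter> (B \<inter> C) = A \<inter> B \<inter> C" by blast
  have 3: "card (A \<inter> C) + card (B \<inter> C) = card ((A \<inter> C) \<union> (B \<inter> C)) + card (A \<inter> B \<inter> C)"
    using card_Un_Int[of "A \<inter> C" "B \<inter> C"] assms e2 by simp
  show ?thesis using 1 2[unfolded e] 3 by linarith
qed

lemma card2i:
  assumes "finite A" "finite B" "finite C"
  shows "card (A \<inter> (B \<union> C)) + card (A \<inter> B \<inter> C) = card (A \<inter> B) + card (A \<inter> C)"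
proof -
  have e: "A \<inter> (B \<union> C) = (A \<inter> B) \<union> (A \<inter> C)" by blast
  have e2: "(A \<inter> B) \<inter> (A \<inter> C) = A \<inter> B \<inter> C" by blast
  show ?thesis using card_Un_Int[of "A \<inter> B" "A \<inter> C"] assms e e2 by simp
qed



definition "PL0 = [{1,5,9}, {2,6}, {3,10}, {7,11}, {4}, {8}, {12::nat}]"
definition "PL1 = [{1,6}, {3,10}, {5,11}, {7,9}, {2}, {4}, {8}, {12::nat}]"
definition "PL2 = [{1,10}, {2,5}, {3,9}, {7,11}, {6}, {4}, {8}, {12::nat}]"
definition "PL3 = [{1,10}, {2,6}, {5,11}, {7,9}, {3}, {4}, {8}, {12::nat}]"
definition "PL4 = [{1,6}, {2,5}, {3,10}, {7,11}, {9}, {4}, {8}, {12::nat}]"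
definition "PL5 = [{2,6}, {3,9}, {5,11}, {1}, {7}, {10}, {4}, {8}, {12::nat}]"
definition "PL6 = [{2,5}, {3,10}, {7,9}, {1}, {6}, {11}, {4}, {8}, {12::nat}]"
definition "PL7 = [{1,6}, {3,9}, {7,11}, {2}, {5}, {10}, {4}, {8}, {12::nat}]"
definition "PL8 = [{2,6}, {3,10}, {5,11}, {7,9}, {1}, {4}, {8}, {12::nat}]"
definition "PL9 = [{1,10}, {2,6}, {3,9}, {7,11}, {5}, {4}, {8}, {12::nat}]"
definition "PL10 = [{1,6}, {3,9}, {5,11}, {2}, {7}, {10}, {4}, {8}, {12::nat}]"
definition "PL11 = [{1,10}, {2,5}, {7,9}, {3}, {6}, {11}, {4}, {8}, {12::nat}]"
definition minc :: "bool \<Rightarrow> bool \<Rightarrow> bool \<Rightarrow> bool \<Rightarrow> bool \<Rightarrow> bool \<Rightarrow> bool \<Rightarrow> bool \<Rightarrow> bool \<Rightarrow> nat" where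
  "minc b1 b2 b3 b5 b6 b7 b9 b10 b11 = (min (of_bool (b1 \<or> b5 \<or> b9) + of_bool (b2 \<or> b6) + of_bool (b3 \<or> b10) + of_bool (b7 \<or> b11)) (min (of_bool (b1 \<or> b6) + of_bool (b3 \<or> b10) + of_bool (b5 \<or> b11) + of_bool (b7 \<or> b9) + of_bool (b2)) (min (of_bool (b1 \<or> b10) + of_bool (b2 \<or> b5) + of_bool (b3 \<or> b9) + of_bool (b7 \<or> b11) + of_bool (b6)) (min (of_bool (b1 \<or> b10) + of_bool (b2 \<or> b6) + of_bool (b5 \<or> b11) + of_bool (b7 \<or> b9) + of_bool (b3)) (min (of_bool (b1 \<or> b6) + of_bool (b2 \<or> b5) + of_bool (b3 \<or> b10) + of_bool (b7 \<or> b11) + of_bool (b9)) (min (of_bool (b2 \<or> b6) + of_bool (b3 \<or> b9) + of_bool (b5 \<or> b11) + of_bool (b1) + of_bool (b7) + of_bool (b10)) (min (of_bool (b2 \<or> b5) + of_bool (b3 \<or> b10) + of_bool (b7 \<or> b9) + of_bool (b1) + of_bool (b6) + of_bool (b11)) (min (of_bool (b1 \<or> b6) + of_bool (b3 \<or> b9) + of_bool (b7 \<or> b11) + of_bool (b2) + of_bool (b5) + of_bool (b10)) (min (of_bool (b2 \<or> b6) + of_bool (b3 \<or> b10) + of_bool (b5 \<or> b11) + of_bool (b7 \<or> b9) + of_bool (b1)) (min (of_bool (b1 \<or> b10) + of_bool (b2 \<or> b6) + of_bool (b3 \<or> b9) + of_bool (b7 \<or> b11) + of_bool (b5)) (min (of_bool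 (b1 \<or> b6) + of_bool (b3 \<or> b9) + of_bool (b5 \<or> b11) + of_bool (b2) + of_bool (b7) + of_bool (b10)) (of_bool (b1 \<or> b10) + of_bool (b2 \<or> b5) + of_bool (b7 \<or> b9) + of_bool (b3) + of_bool (b6) + of_bool (b11)))))))))))))"
definition savf :: "bool \<Rightarrow> bool \<Rightarrow> bool \<Rightarrow> bool \<Rightarrow> bool \<Rightarrow> bool \<Rightarrow> bool \<Rightarrow> bool \<Rightarrow> bool \<Rightarrow> nat" where
  "savf b1 b2 b3 b5 b6 b7 b9 b10 b11 = min ((min (of_bool b1 + of_bool b2) (of_bool b5 + of_bool b6)) + (min (of_bool b1 + of_bool b3) (of_bool b9 + of_bool b10)) + (min (of_bool b5 + of_bool b7) (of_bool b9 + of_bool b11))) (min ((of_bool b1 + of_bool b2 + of_bool b3) + (min (of_bool b5 + of_bool b7) (of_bool b9 + of_bool b11))) (min ((of_bool b5 + of_bool b6 + of_bool b7) + (min (of_bool b1 + of_bool b3) (of_bool b9 + of_bool b10))) ((of_bool b9 + of_bool b10 + of_bool b11) + (min (of_bool b1 + of_bool b2) (of_bool b5 + of_bool b6)))))"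
lemma arithA: "minc b1 b2 b3 b5 b6 b7 b9 b10 b11 + savf b1 b2 b3 b5 b6 b7 b9 b10 b11 \<le> (of_bool b1 + of_bool b2 + of_bool b3 + of_bool b5 + of_bool b6 + of_bool b7 + of_bool b9 + of_bool b10 + of_bool b11)"
  unfolding minc_def savf_def
  by (cases b1; cases b2; cases b3; cases b5; cases b6; cases b7; cases b9; cases b10; cases b11) simp_all
lemma minle: "(X::nat) \<le> m * A + a \<Longrightarrow> X \<le> m * B + a \<Longrightarrow> X \<le> m * min A B + a"
  by (simp add: min_def)
lemma minle2: "(X::nat) \<le> m * A \<Longrightarrow> X \<le> m * B \<Longrightarrow> X \<le> m * min A B"
  by (simp add: min_def)
lemma arithB:
  fixes m p12 p13 p23 a :: nat and b1 b2 b3 b5 b6 b7 b9 b10 b11 :: bool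
  assumes "p12 \<le> m * (of_bool b1 + of_bool b2)"
    and "p12 \<le> m * (of_bool b5 + of_bool b6)"
    and "p13 \<le> m * (of_bool b1 + of_bool b3)"
    and "p13 \<le> m * (of_bool b9 + of_bool b10)"
    and "p23 \<le> m * (of_bool b5 + of_bool b7)"
    and "p23 \<le> m * (of_bool b9 + of_bool b11)"
    and "p12 + p13 \<le> m * (of_bool b1 + of_bool b2 + of_bool b3) + a"
    and "p12 + p23 \<le> m * (of_bool b5 + of_bool b6 + of_bool b7) + a"
    and "p13 + p23 \<le> m * (of_bool b9 + of_bool b10 + of_bool b11) + a"
  shows "p12 + p13 + p23 \<le> m * savf b1 b2 b3 b5 b6 b7 b9 b10 b11 + a"
proof -
  have q12: "p12 \<le> m * (min (of_bool b1 + of_bool b2) (of_bool b5 + of_bool b6))" using assms(1,2) by (rule minle2)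
  have q13: "p13 \<le> m * (min (of_bool b1 + of_bool b3) (of_bool b9 + of_bool b10))" using assms(3,4) by (rule minle2)
  have q23: "p23 \<le> m * (min (of_bool b5 + of_bool b7) (of_bool b9 + of_bool b11))" using assms(5,6) by (rule minle2)
  show ?thesis unfolding savf_def
  proof (intro minle)
    show "p12 + p13 + p23 \<le> m * ((min (of_bool b1 + of_bool b2) (of_bool b5 + of_bool b6)) + (min (of_bool b1 + of_bool b3) (of_bool b9 + of_bool b10)) + (min (of_bool b5 + of_bool b7) (of_bool b9 + of_bool b11))) + a" using q12 q13 q23 by (simp add: algebra_simps)
    show "p12 + p13 + p23 \<le> m * ((of_bool b1 + of_bool b2 + of_bool b3) + (min (of_bool b5 + of_bool b7) (of_bool b9 + of_bool b11))) + a" using assms(7) q23 by (simp add: algebra_simps)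
    show "p12 + p13 + p23 \<le> m * ((of_bool b5 + of_bool b6 + of_bool b7) + (min (of_bool b1 + of_bool b3) (of_bool b9 + of_bool b10))) + a" using assms(8) q13 by (simp add: algebra_simps)
    show "p12 + p13 + p23 \<le> m * ((of_bool b9 + of_bool b10 + of_bool b11) + (min (of_bool b1 + of_bool b2) (of_bool b5 + of_bool b6))) + a" using assms(9) q12 by (simp add: algebra_simps)
  qed
qed
lemma arith9:
  fixes m L p12 p13 p23 a z :: nat and b1 b2 b3 b5 b6 b7 b9 b10 b11 :: bool
  assumes "m * (of_bool b1 + of_bool b2 + of_bool b3 + of_bool b5 + of_bool b6 + of_bool b7 + of_bool b9 + of_bool b10 + of_bool b11) + z + a \<le> L + p12 + p13 + p23"
    and "p12 \<le> m * (of_bool b1 + of_bool b2)"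
    and "p12 \<le> m * (of_bool b5 + of_bool b6)"
    and "p13 \<le> m * (of_bool b1 + of_bool b3)"
    and "p13 \<le> m * (of_bool b9 + of_bool b10)"
    and "p23 \<le> m * (of_bool b5 + of_bool b7)"
    and "p23 \<le> m * (of_bool b9 + of_bool b11)"
    and "p12 + p13 \<le> m * (of_bool b1 + of_bool b2 + of_bool b3) + a"
    and "p12 + p23 \<le> m * (of_bool b5 + of_bool b6 + of_bool b7) + a"
    and "p13 + p23 \<le> m * (of_bool b9 + of_bool b10 + of_bool b11) + a"
    and "a \<le> p12" "a \<le> p13" "a \<le> p23"
  shows "m * minc b1 b2 b3 b5 b6 b7 b9 b10 b11 + z \<le> L"
proof -
  have B: "p12 + p13 + p23 \<le> m * savf b1 b2 b3 b5 b6 b7 b9 b10 b11 + a" by (rule arithB) (use assms(2-10) in auto)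
  have "m * (minc b1 b2 b3 b5 b6 b7 b9 b10 b11 + savf b1 b2 b3 b5 b6 b7 b9 b10 b11) \<le> m * (of_bool b1 + of_bool b2 + of_bool b3 + of_bool b5 + of_bool b6 + of_bool b7 + of_bool b9 + of_bool b10 + of_bool b11)"
    using arithA by (rule mult_left_mono) simp
  then have A: "m * minc b1 b2 b3 b5 b6 b7 b9 b10 b11 + m * savf b1 b2 b3 b5 b6 b7 b9 b10 b11 \<le> m * (of_bool b1 + of_bool b2 + of_bool b3 + of_bool b5 + of_bool b6 + of_bool b7 + of_bool b9 + of_bool b10 + of_bool b11)" by (simp add: algebra_simps)
  show ?thesis using A B assms(1) by linarith
qed

lemma minI: "(a::nat) \<le> x + z \<Longrightarrow> a \<le> y + z \<Longrightarrow> a \<le> min x y + z"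
  by simp

lemma I12: "({1..12}::nat set) = {1,2,3,4,5,6,7,8,9,10,11,12}"
  by (auto; presburger)

lemma cc_le:
  assumes "S \<subseteq> {1..12::nat}"
  shows "clique_cover_number S \<le> minc (1 \<in> S) (2 \<in> S) (3 \<in> S) (5 \<in> S) (6 \<in> S) (7 \<in> S) (9 \<in> S) (10 \<in> S) (11 \<in> S) + (of_bool (4 \<in> S) + of_bool (8 \<in> S) + of_bool (12 \<in> S))"
  unfolding minc_def
proof (intro minI)
  have "S \<subseteq> \<Union>(set PL0)" using assms unfolding I12 by (auto simp: PL0_def)
  moreover have "\<forall>C\<in>set PL0. \<forall>D\<in>set PL0. C \<inter> D = {} \<or> C = D" by (simp add: PL0_def)
  moreover have "\<forall>C\<in>set PL0. \<forall>a\<in>C. \<forall>b\<in>C. a \<noteq> b \<longrightarrow> Gu_edge a b"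
    by (simp add: PL0_def Gu_edge_def G_edge_def receivers_def W_def K_def)
  ultimately have "clique_cover_number S \<le> sum_list (map (\<lambda>C. of_bool (C \<inter> S \<noteq> {})) PL0)"
    by (rule cover)
  then show "clique_cover_number S \<le> (of_bool (1 \<in> S \<or> 5 \<in> S \<or> 9 \<in> S) + of_bool (2 \<in> S \<or> 6 \<in> S) + of_bool (3 \<in> S \<or> 10 \<in> S) + of_bool (7 \<in> S \<or> 11 \<in> S)) + (of_bool (4 \<in> S) + of_bool (8 \<in> S) + of_bool (12 \<in> S))"
    by (simp add: PL0_def ins_int_ne)
next
  have "S \<subseteq> \<Union>(set PL1)" using assms unfolding I12 by (auto simp: PL1_def)
  moreover have "\<forall>C\<in>set PL1. \<forall>D\<in>set PL1. C \<inter> D = {} \<or> C = D" by (simp add: PL1_def)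
  moreover have "\<forall>C\<in>set PL1. \<forall>a\<in>C. \<forall>b\<in>C. a \<noteq> b \<longrightarrow> Gu_edge a b"
    by (simp add: PL1_def Gu_edge_def G_edge_def receivers_def W_def K_def)
  ultimately have "clique_cover_number S \<le> sum_list (map (\<lambda>C. of_bool (C \<inter> S \<noteq> {})) PL1)"
    by (rule cover)
  then show "clique_cover_number S \<le> (of_bool (1 \<in> S \<or> 6 \<in> S) + of_bool (3 \<in> S \<or> 10 \<in> S) + of_bool (5 \<in> S \<or> 11 \<in> S) + of_bool (7 \<in> S \<or> 9 \<in> S) + of_bool (2 \<in> S)) + (of_bool (4 \<in> S) + of_bool (8 \<in> S) + of_bool (12 \<in> S))"
    by (simp add: PL1_def ins_int_ne)
next
  have "S \<subseteq> \<Union>(set PL2)" using assms unfolding I12 by (auto simp: PL2_def)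
  moreover have "\<forall>C\<in>set PL2. \<forall>D\<in>set PL2. C \<inter> D = {} \<or> C = D" by (simp add: PL2_def)
  moreover have "\<forall>C\<in>set PL2. \<forall>a\<in>C. \<forall>b\<in>C. a \<noteq> b \<longrightarrow> Gu_edge a b"
    by (simp add: PL2_def Gu_edge_def G_edge_def receivers_def W_def K_def)
  ultimately have "clique_cover_number S \<le> sum_list (map (\<lambda>C. of_bool (C \<inter> S \<noteq> {})) PL2)"
    by (rule cover)
  then show "clique_cover_number S \<le> (of_bool (1 \<in> S \<or> 10 \<in> S) + of_bool (2 \<in> S \<or> 5 \<in> S) + of_bool (3 \<in> S \<or> 9 \<in> S) + of_bool (7 \<in> S \<or> 11 \<in> S) + of_bool (6 \<in> S)) + (of_bool (4 \<in> S) + of_bool (8 \<in> S) + of_bool (12 \<in> S))"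
    by (simp add: PL2_def ins_int_ne)
next
  have "S \<subseteq> \<Union>(set PL3)" using assms unfolding I12 by (auto simp: PL3_def)
  moreover have "\<forall>C\<in>set PL3. \<forall>D\<in>set PL3. C \<inter> D = {} \<or> C = D" by (simp add: PL3_def)
  moreover have "\<forall>C\<in>set PL3. \<forall>a\<in>C. \<forall>b\<in>C. a \<noteq> b \<longrightarrow> Gu_edge a b"
    by (simp add: PL3_def Gu_edge_def G_edge_def receivers_def W_def K_def)
  ultimately have "clique_cover_number S \<le> sum_list (map (\<lambda>C. of_bool (C \<inter> S \<noteq> {})) PL3)"
    by (rule cover)
  then show "clique_cover_number S \<le> (of_bool (1 \<in> S \<or> 10 \<in> S) + of_bool (2 \<in> S \<or> 6 \<in> S) + of_bool (5 \<in> S \<or> 11 \<in> S) + of_bool (7 \<in> S \<or> 9 \<in> S) + of_bool (3 \<in> S)) + (of_bool (4 \<in> S) + of_bool (8 \<in> S) + of_bool (12 \<in> S))"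
    by (simp add: PL3_def ins_int_ne)
next
  have "S \<subseteq> \<Union>(set PL4)" using assms unfolding I12 by (auto simp: PL4_def)
  moreover have "\<forall>C\<in>set PL4. \<forall>D\<in>set PL4. C \<inter> D = {} \<or> C = D" by (simp add: PL4_def)
  moreover have "\<forall>C\<in>set PL4. \<forall>a\<in>C. \<forall>b\<in>C. a \<noteq> b \<longrightarrow> Gu_edge a b"
    by (simp add: PL4_def Gu_edge_def G_edge_def receivers_def W_def K_def)
  ultimately have "clique_cover_number S \<le> sum_list (map (\<lambda>C. of_bool (C \<inter> S \<noteq> {})) PL4)"
    by (rule cover)
  then show "clique_cover_number S \<le> (of_bool (1 \<in> S \<or> 6 \<in> S) + of_bool (2 \<in> S \<or> 5 \<in> S) + of_bool (3 \<in> S \<or> 10 \<in> S) + of_bool (7 \<in> S \<or> 11 \<in> S) + of_bool (9 \<in> S)) + (of_bool (4 \<in> S) + of_bool (8 \<in> S) + of_bool (12 \<in> S))"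
    by (simp add: PL4_def ins_int_ne)
next
  have "S \<subseteq> \<Union>(set PL5)" using assms unfolding I12 by (auto simp: PL5_def)
  moreover have "\<forall>C\<in>set PL5. \<forall>D\<in>set PL5. C \<inter> D = {} \<or> C = D" by (simp add: PL5_def)
  moreover have "\<forall>C\<in>set PL5. \<forall>a\<in>C. \<forall>b\<in>C. a \<noteq> b \<longrightarrow> Gu_edge a b"
    by (simp add: PL5_def Gu_edge_def G_edge_def receivers_def W_def K_def)
  ultimately have "clique_cover_number S \<le> sum_list (map (\<lambda>C. of_bool (C \<inter> S \<noteq> {})) PL5)"
    by (rule cover)
  then show "clique_cover_number S \<le> (of_bool (2 \<in> S \<or> 6 \<in> S) + of_bool (3 \<in> S \<or> 9 \<in> S) + of_bool (5 \<in> S \<or> 11 \<in> S) + of_bool (1 \<in> S) + of_bool (7 \<in> S) + of_bool (10 \<in> S)) + (of_bool (4 \<in> S) + of_bool (8 \<in> S) + of_bool (12 \<in> S))"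
    by (simp add: PL5_def ins_int_ne)
next
  have "S \<subseteq> \<Union>(set PL6)" using assms unfolding I12 by (auto simp: PL6_def)
  moreover have "\<forall>C\<in>set PL6. \<forall>D\<in>set PL6. C \<inter> D = {} \<or> C = D" by (simp add: PL6_def)
  moreover have "\<forall>C\<in>set PL6. \<forall>a\<in>C. \<forall>b\<in>C. a \<noteq> b \<longrightarrow> Gu_edge a b"
    by (simp add: PL6_def Gu_edge_def G_edge_def receivers_def W_def K_def)
  ultimately have "clique_cover_number S \<le> sum_list (map (\<lambda>C. of_bool (C \<inter> S \<noteq> {})) PL6)"
    by (rule cover)
  then show "clique_cover_number S \<le> (of_bool (2 \<in> S \<or> 5 \<in> S) + of_bool (3 \<in> S \<or> 10 \<in> S) + of_bool (7 \<in> S \<or> 9 \<in> S) + of_bool (1 \<in> S) + of_bool (6 \<in> S) + of_bool (11 \<in> S)) + (of_bool (4 \<in> S) + of_bool (8 \<in> S) + of_bool (12 \<in> S))"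
    by (simp add: PL6_def ins_int_ne)
next
  have "S \<subseteq> \<Union>(set PL7)" using assms unfolding I12 by (auto simp: PL7_def)
  moreover have "\<forall>C\<in>set PL7. \<forall>D\<in>set PL7. C \<inter> D = {} \<or> C = D" by (simp add: PL7_def)
  moreover have "\<forall>C\<in>set PL7. \<forall>a\<in>C. \<forall>b\<in>C. a \<noteq> b \<longrightarrow> Gu_edge a b"
    by (simp add: PL7_def Gu_edge_def G_edge_def receivers_def W_def K_def)
  ultimately have "clique_cover_number S \<le> sum_list (map (\<lambda>C. of_bool (C \<inter> S \<noteq> {})) PL7)"
    by (rule cover)
  then show "clique_cover_number S \<le> (of_bool (1 \<in> S \<or> 6 \<in> S) + of_bool (3 \<in> S \<or> 9 \<in> S) + of_bool (7 \<in> S \<or> 11 \<in> S) + of_bool (2 \<in> S) + of_bool (5 \<in> S) + of_bool (10 \<in> S)) + (of_bool (4 \<in> S) + of_bool (8 \<in> S) + of_bool (12 \<in> S))"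
    by (simp add: PL7_def ins_int_ne)
next
  have "S \<subseteq> \<Union>(set PL8)" using assms unfolding I12 by (auto simp: PL8_def)
  moreover have "\<forall>C\<in>set PL8. \<forall>D\<in>set PL8. C \<inter> D = {} \<or> C = D" by (simp add: PL8_def)
  moreover have "\<forall>C\<in>set PL8. \<forall>a\<in>C. \<forall>b\<in>C. a \<noteq> b \<longrightarrow> Gu_edge a b"
    by (simp add: PL8_def Gu_edge_def G_edge_def receivers_def W_def K_def)
  ultimately have "clique_cover_number S \<le> sum_list (map (\<lambda>C. of_bool (C \<inter> S \<noteq> {})) PL8)"
    by (rule cover)
  then show "clique_cover_number S \<le> (of_bool (2 \<in> S \<or> 6 \<in> S) + of_bool (3 \<in> S \<or> 10 \<in> S) + of_bool (5 \<in> S \<or> 11 \<in> S) + of_bool (7 \<in> S \<or> 9 \<in> S) + of_bool (1 \<in> S)) + (of_bool (4 \<in> S) + of_bool (8 \<in> S) + of_bool (12 \<in> S))"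
    by (simp add: PL8_def ins_int_ne)
next
  have "S \<subseteq> \<Union>(set PL9)" using assms unfolding I12 by (auto simp: PL9_def)
  moreover have "\<forall>C\<in>set PL9. \<forall>D\<in>set PL9. C \<inter> D = {} \<or> C = D" by (simp add: PL9_def)
  moreover have "\<forall>C\<in>set PL9. \<forall>a\<in>C. \<forall>b\<in>C. a \<noteq> b \<longrightarrow> Gu_edge a b"
    by (simp add: PL9_def Gu_edge_def G_edge_def receivers_def W_def K_def)
  ultimately have "clique_cover_number S \<le> sum_list (map (\<lambda>C. of_bool (C \<inter> S \<noteq> {})) PL9)"
    by (rule cover)
  then show "clique_cover_number S \<le> (of_bool (1 \<in> S \<or> 10 \<in> S) + of_bool (2 \<in> S \<or> 6 \<in> S) + of_bool (3 \<in> S \<or> 9 \<in> S) + of_bool (7 \<in> S \<or> 11 \<in> S) + of_bool (5 \<in> S)) + (of_bool (4 \<in> S) + of_bool (8 \<in> S) + of_bool (12 \<in> S))"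
    by (simp add: PL9_def ins_int_ne)
next
  have "S \<subseteq> \<Union>(set PL10)" using assms unfolding I12 by (auto simp: PL10_def)
  moreover have "\<forall>C\<in>set PL10. \<forall>D\<in>set PL10. C \<inter> D = {} \<or> C = D" by (simp add: PL10_def)
  moreover have "\<forall>C\<in>set PL10. \<forall>a\<in>C. \<forall>b\<in>C. a \<noteq> b \<longrightarrow> Gu_edge a b"
    by (simp add: PL10_def Gu_edge_def G_edge_def receivers_def W_def K_def)
  ultimately have "clique_cover_number S \<le> sum_list (map (\<lambda>C. of_bool (C \<inter> S \<noteq> {})) PL10)"
    by (rule cover)
  then show "clique_cover_number S \<le> (of_bool (1 \<in> S \<or> 6 \<in> S) + of_bool (3 \<in> S \<or> 9 \<in> S) + of_bool (5 \<in> S \<or> 11 \<in> S) + of_bool (2 \<in> S) + of_bool (7 \<in> S) + of_bool (10 \<in> S)) + (of_bool (4 \<in> S) + of_bool (8 \<in> S) + of_bool (12 \<in> S))"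
    by (simp add: PL10_def ins_int_ne)
next
  have "S \<subseteq> \<Union>(set PL11)" using assms unfolding I12 by (auto simp: PL11_def)
  moreover have "\<forall>C\<in>set PL11. \<forall>D\<in>set PL11. C \<inter> D = {} \<or> C = D" by (simp add: PL11_def)
  moreover have "\<forall>C\<in>set PL11. \<forall>a\<in>C. \<forall>b\<in>C. a \<noteq> b \<longrightarrow> Gu_edge a b"
    by (simp add: PL11_def Gu_edge_def G_edge_def receivers_def W_def K_def)
  ultimately have "clique_cover_number S \<le> sum_list (map (\<lambda>C. of_bool (C \<inter> S \<noteq> {})) PL11)"
    by (rule cover)
  then show "clique_cover_number S \<le> (of_bool (1 \<in> S \<or> 10 \<in> S) + of_bool (2 \<in> S \<or> 5 \<in> S) + of_bool (7 \<in> S \<or> 9 \<in> S) + of_bool (3 \<in> S) + of_bool (6 \<in> S) + of_bool (11 \<in> S)) + (of_bool (4 \<in> S) + of_bool (8 \<in> S) + of_bool (12 \<in> S))"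
    by (simp add: PL11_def ins_int_ne)
qed



lemma lower:
  fixes E :: "(nat \<Rightarrow> nat \<Rightarrow> 'a::finite) \<Rightarrow> nat \<Rightarrow> 'a"
  assumes v: "valid_code S m l E R D" and loc: "locality_le S m R 1" and m: "m \<ge> 1"
    and n2: "card (UNIV :: 'a set) \<ge> 2" and S: "S \<subseteq> {1..12::nat}"
  shows "m * clique_cover_number S \<le> l"
proof -
  define A where "A = Rp S R 1"
  define B where "B = Rp S R 2"
  define C where "C = Rp S R 3"
  have r: "1 \<in> receivers" "2 \<in> receivers" "3 \<in> receivers" by (auto simp: receivers_def)
  have sub: "\<And>i. i \<in> receivers \<Longrightarrow> Rp S R i \<subseteq> {..<l}"
    using v unfolding valid_code_def Rp_def by auto
  have fA: "finite A" and fB: "finite B" and fC: "finite C"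
    using sub r finite_subset unfolding A_def B_def C_def by blast+
  have "card (A \<union> B \<union> C) \<le> card {..<l}"
    using sub r unfolding A_def B_def C_def by (intro card_mono) auto
  then have U: "card (A \<union> B \<union> C) \<le> l" by simp
  have IE: "card (A \<union> B \<union> C) + card (A \<inter> B) + card (A \<inter> C) + card (B \<inter> C)
       = card A + card B + card C + card (A \<inter> B \<inter> C)" using card3[OF fA fB fC] .
  have cA: "card A = m * card (W 1 \<inter> S)" unfolding A_def by (rule Rp_card[OF v loc m n2 r(1)])
  have cB: "card B = m * card (W 2 \<inter> S)" unfolding B_def by (rule Rp_card[OF v loc m n2 r(2)])
  have cC: "card C = m * card (W 3 \<inter> S)" unfolding C_def by (rule Rp_card[OF v loc m n2 r(3)])
  note P = Rp_pair[OF v loc m n2]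
  have p12a: "card (A \<inter> B) \<le> m * card (W 1 \<inter> S \<inter> K 2)"
    using P[OF r(1), of "{2}"] r unfolding A_def B_def by simp
  have p12b: "card (A \<inter> B) \<le> m * card (W 2 \<inter> S \<inter> K 1)"
    using P[OF r(2), of "{1}"] r unfolding A_def B_def by (simp add: Int_commute)
  have p13a: "card (A \<inter> C) \<le> m * card (W 1 \<inter> S \<inter> K 3)"
    using P[OF r(1), of "{3}"] r unfolding A_def C_def by simp
  have p13b: "card (A \<inter> C) \<le> m * card (W 3 \<inter> S \<inter> K 1)"
    using P[OF r(3), of "{1}"] r unfolding A_def C_def by (simp add: Int_commute)
  have p23a: "card (B \<inter> C) \<le> m * card (W 2 \<inter> S \<inter> K 3)"
    using P[OF r(2), of "{3}"] r unfolding B_def C_def by simp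
  have p23b: "card (B \<inter> C) \<le> m * card (W 3 \<inter> S \<inter> K 2)"
    using P[OF r(3), of "{2}"] r unfolding B_def C_def by (simp add: Int_commute)
  have u1: "card (A \<inter> (B \<union> C)) \<le> m * card (W 1 \<inter> S \<inter> (K 2 \<union> K 3))"
    using P[OF r(1), of "{2,3}"] r unfolding A_def B_def C_def by simp
  have u2: "card (B \<inter> (A \<union> C)) \<le> m * card (W 2 \<inter> S \<inter> (K 1 \<union> K 3))"
    using P[OF r(2), of "{1,3}"] r unfolding A_def B_def C_def by simp
  have u3: "card (C \<inter> (A \<union> B)) \<le> m * card (W 3 \<inter> S \<inter> (K 1 \<union> K 2))"
    using P[OF r(3), of "{1,2}"] r unfolding A_def B_def C_def by simp
  have i1: "card (A \<inter> (B \<union> C)) + card (A \<inter> B \<inter> C) = card (A \<inter> B) + card (A \<inter> C)"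
    using card2i[OF fA fB fC] .
  have i2: "card (B \<inter> (A \<union> C)) + card (A \<inter> B \<inter> C) = card (A \<inter> B) + card (B \<inter> C)"
    using card2i[OF fB fA fC] by (simp add: Int_commute Int_left_commute)
  have i3: "card (C \<inter> (A \<union> B)) + card (A \<inter> B \<inter> C) = card (A \<inter> C) + card (B \<inter> C)"
    using card2i[OF fC fA fB] by (simp add: Int_commute Int_left_commute)
  have t1: "card (A \<inter> B \<inter> C) \<le> card (A \<inter> B)" using fA by (intro card_mono) auto
  have t2: "card (A \<inter> B \<inter> C) \<le> card (A \<inter> C)" using fA by (intro card_mono) auto
  have t3: "card (A \<inter> B \<inter> C) \<le> card (B \<inter> C)" using fB by (intro card_mono) auto
  have e1: "W 1 \<inter> S = {1,2,3,4} \<inter> S" "W 2 \<inter> S = {5,6,7,8} \<inter> S" "W 3 \<inter> S = {9,10,11,12} \<inter> S"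
    by (auto simp: W_def)
  have e2: "W 1 \<inter> S \<inter> K 2 = {1,2} \<inter> S" "W 2 \<inter> S \<inter> K 1 = {5,6} \<inter> S"
    "W 1 \<inter> S \<inter> K 3 = {1,3} \<inter> S" "W 3 \<inter> S \<inter> K 1 = {9,10} \<inter> S"
    "W 2 \<inter> S \<inter> K 3 = {5,7} \<inter> S" "W 3 \<inter> S \<inter> K 2 = {9,11} \<inter> S"
    "W 1 \<inter> S \<inter> (K 2 \<union> K 3) = {1,2,3} \<inter> S" "W 2 \<inter> S \<inter> (K 1 \<union> K 3) = {5,6,7} \<inter> S"
    "W 3 \<inter> S \<inter> (K 1 \<union> K 2) = {9,10,11} \<inter> S"
    by (auto simp: W_def K_def)
  have k12: "card ({1,2} \<inter> S) = of_bool (1 \<in> S) + of_bool (2 \<in> S)" by (simp add: card_ins_int)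
  have k56: "card ({5,6} \<inter> S) = of_bool (5 \<in> S) + of_bool (6 \<in> S)" by (simp add: card_ins_int)
  have k13: "card ({1,3} \<inter> S) = of_bool (1 \<in> S) + of_bool (3 \<in> S)" by (simp add: card_ins_int)
  have k910: "card ({9,10} \<inter> S) = of_bool (9 \<in> S) + of_bool (10 \<in> S)" by (simp add: card_ins_int)
  have k57: "card ({5,7} \<inter> S) = of_bool (5 \<in> S) + of_bool (7 \<in> S)" by (simp add: card_ins_int)
  have k911: "card ({9,11} \<inter> S) = of_bool (9 \<in> S) + of_bool (11 \<in> S)" by (simp add: card_ins_int)
  have k123: "card ({1,2,3} \<inter> S) = of_bool (1 \<in> S) + of_bool (2 \<in> S) + of_bool (3 \<in> S)" by (simp add: card_ins_int)
  have k567: "card ({5,6,7} \<inter> S) = of_bool (5 \<in> S) + of_bool (6 \<in> S) + of_bool (7 \<in> S)" by (simp add: card_ins_int)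
  have k91011: "card ({9,10,11} \<inter> S) = of_bool (9 \<in> S) + of_bool (10 \<in> S) + of_bool (11 \<in> S)" by (simp add: card_ins_int)
  have k1234: "card ({1,2,3,4} \<inter> S) = of_bool (1 \<in> S) + of_bool (2 \<in> S) + of_bool (3 \<in> S) + of_bool (4 \<in> S)" by (simp add: card_ins_int)
  have k5678: "card ({5,6,7,8} \<inter> S) = of_bool (5 \<in> S) + of_bool (6 \<in> S) + of_bool (7 \<in> S) + of_bool (8 \<in> S)" by (simp add: card_ins_int)
  have k9101112: "card ({9,10,11,12} \<inter> S) = of_bool (9 \<in> S) + of_bool (10 \<in> S) + of_bool (11 \<in> S) + of_bool (12 \<in> S)" by (simp add: card_ins_int)
  note ks = k12 k56 k13 k910 k57 k911 k123 k567 k91011 k1234 k5678 k9101112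
  have ar: "m * minc (1 \<in> S) (2 \<in> S) (3 \<in> S) (5 \<in> S) (6 \<in> S) (7 \<in> S) (9 \<in> S) (10 \<in> S) (11 \<in> S)
      + m * (of_bool (4 \<in> S) + of_bool (8 \<in> S) + of_bool (12 \<in> S)) \<le> card (A \<union> B \<union> C)"
  proof (rule arith9)
    show "card (A \<inter> B) \<le> m * (of_bool (1 \<in> S) + of_bool (2 \<in> S))" using p12a unfolding e2 ks by assumption
    show "card (A \<inter> B) \<le> m * (of_bool (5 \<in> S) + of_bool (6 \<in> S))" using p12b unfolding e2 ks by assumption
    show "card (A \<inter> C) \<le> m * (of_bool (1 \<in> S) + of_bool (3 \<in> S))" using p13a unfolding e2 ks by assumption
    show "card (A \<inter> C) \<le> m * (of_bool (9 \<in> S) + of_bool (10 \<in> S))" using p13b unfolding e2 ks by assumption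
    show "card (B \<inter> C) \<le> m * (of_bool (5 \<in> S) + of_bool (7 \<in> S))" using p23a unfolding e2 ks by assumption
    show "card (B \<inter> C) \<le> m * (of_bool (9 \<in> S) + of_bool (11 \<in> S))" using p23b unfolding e2 ks by assumption
    show "card (A \<inter> B) + card (A \<inter> C) \<le> m * (of_bool (1 \<in> S) + of_bool (2 \<in> S) + of_bool (3 \<in> S)) + card (A \<inter> B \<inter> C)"
    proof -
      have "card (A \<inter> (B \<union> C)) \<le> m * (of_bool (1 \<in> S) + of_bool (2 \<in> S) + of_bool (3 \<in> S))"
        using u1 unfolding e2 ks by assumption
      then show ?thesis using i1 by linarith
    qed
    show "card (A \<inter> B) + card (B \<inter> C) \<le> m * (of_bool (5 \<in> S) + of_bool (6 \<in> S) + of_bool (7 \<in> S)) + card (A \<inter> B \<inter> C)"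
    proof -
      have "card (B \<inter> (A \<union> C)) \<le> m * (of_bool (5 \<in> S) + of_bool (6 \<in> S) + of_bool (7 \<in> S))"
        using u2 unfolding e2 ks by assumption
      then show ?thesis using i2 by linarith
    qed
    show "card (A \<inter> C) + card (B \<inter> C) \<le> m * (of_bool (9 \<in> S) + of_bool (10 \<in> S) + of_bool (11 \<in> S)) + card (A \<inter> B \<inter> C)"
    proof -
      have "card (C \<inter> (A \<union> B)) \<le> m * (of_bool (9 \<in> S) + of_bool (10 \<in> S) + of_bool (11 \<in> S))"
        using u3 unfolding e2 ks by assumption
      then show ?thesis using i3 by linarith
    qed
    show "card (A \<inter> B \<inter> C) \<le> card (A \<inter> B)" by (rule t1)
    show "card (A \<inter> B \<inter> C) \<le> card (A \<inter> C)" by (rule t2)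
    show "card (A \<inter> B \<inter> C) \<le> card (B \<inter> C)" by (rule t3)
    show "m * (of_bool (1 \<in> S) + of_bool (2 \<in> S) + of_bool (3 \<in> S) + of_bool (5 \<in> S) + of_bool (6 \<in> S) + of_bool (7 \<in> S) + of_bool (9 \<in> S) + of_bool (10 \<in> S) + of_bool (11 \<in> S))
      + m * (of_bool (4 \<in> S) + of_bool (8 \<in> S) + of_bool (12 \<in> S)) + card (A \<inter> B \<inter> C)
      \<le> card (A \<union> B \<union> C) + card (A \<inter> B) + card (A \<inter> C) + card (B \<inter> C)"
      using IE cA cB cC unfolding e1 ks by (simp add: algebra_simps)
  qed
  have "m * clique_cover_number S \<le> m * (minc (1 \<in> S) (2 \<in> S) (3 \<in> S) (5 \<in> S) (6 \<in> S) (7 \<in> S) (9 \<in> S) (10 \<in> S) (11 \<in> S)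
      + (of_bool (4 \<in> S) + of_bool (8 \<in> S) + of_bool (12 \<in> S)))"
    using cc_le[OF S] by (rule mult_left_mono) simp
  then show ?thesis using ar U by (simp add: algebra_simps)
qed



lemma cc_exists:
  assumes "finite S"
  shows "\<exists>P. partition_on S P \<and> (\<forall>C\<in>P. is_clique_in S C) \<and> finite P \<and> card P = clique_cover_number S"
proof -
  let ?Q = "\<lambda>k. \<exists>P. partition_on S P \<and> (\<forall>C\<in>P. is_clique_in S C) \<and> finite P \<and> card P = k"
  have "?Q (card ((\<lambda>j. {j}) ` S))"
  proof (intro exI conjI)
    show "partition_on S ((\<lambda>j. {j}) ` S)"
      by (auto simp: partition_on_def disjoint_def)
    show "\<forall>C\<in>(\<lambda>j. {j}) ` S. is_clique_in S C" by (auto simp: is_clique_in_def)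
    show "finite ((\<lambda>j. {j}) ` S)" using assms by simp
  qed simp
  then have "?Q (LEAST k. ?Q k)" by (rule LeastI)
  then show ?thesis unfolding clique_cover_number_def .
qed

lemma upper:
  fixes S :: "nat set"
  assumes finS: "finite S"
  shows "\<exists>(E :: (nat \<Rightarrow> nat \<Rightarrow> 'a::finite) \<Rightarrow> nat \<Rightarrow> 'a) R D.
           valid_code S 1 (clique_cover_number S) E R D \<and> locality_le S 1 R 1"
proof -
  obtain P where part: "partition_on S P" and cl: "\<forall>C\<in>P. is_clique_in S C"
    and finP: "finite P" and cP: "card P = clique_cover_number S"
    using cc_exists[OF finS] by blast
  define l where "l = card P"
  define n where "n = card (UNIV :: 'a set)"
  have npos: "n > 0" unfolding n_def by (simp add: finite_UNIV_card_ge_0)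
  obtain h :: "'a \<Rightarrow> nat" where h: "bij_betw h UNIV {0..<n}"
    using ex_bij_betw_finite_nat[of "UNIV :: 'a set"] unfolding n_def by auto
  obtain idx where idx: "bij_betw idx {0..<l} P"
    using ex_bij_betw_nat_finite[OF finP] unfolding l_def by auto
  define hinv where "hinv = inv_into UNIV h"
  have h_lt: "\<And>a. h a < n" using h by (auto simp: bij_betw_def)
  have h_hinv: "\<And>v. v < n \<Longrightarrow> h (hinv v) = v"
    unfolding hinv_def using h by (simp add: bij_betw_inv_into_right)
  have hinv_h: "\<And>a. hinv (h a) = a"
    unfolding hinv_def using h by (simp add: bij_betw_def)
  have idxP: "\<And>q. q < l \<Longrightarrow> idx q \<in> P" using idx by (auto simp: bij_betw_def)
  have idxS: "\<And>q. q < l \<Longrightarrow> idx q \<subseteq> S" using idxP part by (auto simp: partition_on_def)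
  have idxfin: "\<And>q. q < l \<Longrightarrow> finite (idx q)" using idxS finS finite_subset by blast
  have cover: "\<And>j. j \<in> S \<Longrightarrow> \<exists>q<l. j \<in> idx q"
  proof -
    fix j assume "j \<in> S"
    then obtain C where "C \<in> P" "j \<in> C" using part by (auto simp: partition_on_def)
    then obtain q where "q \<in> {0..<l}" "idx q = C" using idx by (auto simp: bij_betw_def)
    then show "\<exists>q<l. j \<in> idx q" using \<open>j \<in> C\<close> by auto
  qed
  have uniq: "\<And>j q q'. q < l \<Longrightarrow> q' < l \<Longrightarrow> j \<in> idx q \<Longrightarrow> j \<in> idx q' \<Longrightarrow> q = q'"
  proof -
    fix j q q' assume a: "q < l" "q' < l" "j \<in> idx q" "j \<in> idx q'"
    have "idx q = idx q'"
    proof (rule ccontr)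
      assume "idx q \<noteq> idx q'"
      then have "idx q \<inter> idx q' = {}" using part idxP a(1,2)
        by (auto simp: partition_on_def disjoint_def)
      then show False using a by blast
    qed
    then show "q = q'" using idx a(1,2) by (auto simp: bij_betw_def inj_on_def)
  qed
  define E :: "(nat \<Rightarrow> nat \<Rightarrow> 'a) \<Rightarrow> nat \<Rightarrow> 'a" where
    "E = (\<lambda>x q. hinv ((\<Sum>j\<in>idx q. h (x j 0)) mod n))"
  define R where "R = (\<lambda>i. {q \<in> {0..<l}. idx q \<inter> W i \<noteq> {}})"
  define qof where "qof = (\<lambda>j. SOME q. q < l \<and> j \<in> idx q)"
  define D :: "nat \<Rightarrow> (nat \<Rightarrow> 'a) \<Rightarrow> (nat \<Rightarrow> nat \<Rightarrow> 'a) \<Rightarrow> nat \<Rightarrow> nat \<Rightarrow> 'a" where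
    "D = (\<lambda>i c s j k. hinv (nat ((int (h (c (qof j))) - (\<Sum>j'\<in>idx (qof j) - {j}. int (h (s j' 0)))) mod int n)))"
  have qof: "\<And>j. j \<in> S \<Longrightarrow> qof j < l \<and> j \<in> idx (qof j)"
    unfolding qof_def using cover by (rule someI_ex) 
  have valid: "valid_code S 1 l E R D"
    unfolding valid_code_def
  proof (intro conjI ballI allI impI)
    fix i assume "i \<in> receivers"
    show "R i \<subseteq> {..<l}" by (auto simp: R_def)
  next
    fix x :: "nat \<Rightarrow> nat \<Rightarrow> 'a" and i j k :: nat
    assume x: "x \<in> msgs S 1" and i: "i \<in> receivers" and j: "j \<in> W i \<inter> S" and k: "k < 1"
    define q where "q = qof j"
    have q: "q < l" "j \<in> idx q" using qof j unfolding q_def by auto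
    have qR: "q \<in> R i" using q j by (auto simp: R_def)
    have fin: "finite (idx q)" using idxfin q by blast
    have others: "\<And>j'. j' \<in> idx q - {j} \<Longrightarrow> restr_msgs x (K i \<inter> S) 1 j' 0 = x j' 0"
    proof -
      fix j' assume j': "j' \<in> idx q - {j}"
      have "is_clique_in S (idx q)" using cl idxP q by blast
      then have gu: "Gu_edge j j'" and j'S: "j' \<in> S" using j' q by (auto simp: is_clique_in_def)
      then obtain i' where i': "i' \<in> receivers" "j \<in> W i'" "j' \<in> K i'"
        by (auto simp: Gu_edge_def G_edge_def)
      have "i' = i" using WW_disj[OF i' (1) i] i'(2) j by blast
      then show "restr_msgs x (K i \<inter> S) 1 j' 0 = x j' 0" using i' j'S by (simp add: restr_msgs_def)
    qed
    let ?A = "\<Sum>j'\<in>idx q. h (x j' 0)"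
    let ?B = "\<Sum>j'\<in>idx q - {j}. int (h (x j' 0))"
    have hE: "h (E x q) = ?A mod n" unfolding E_def using h_hinv npos by simp
    have sumA: "int ?A = int (h (x j 0)) + ?B"
      using sum.remove[OF fin q(2), of "\<lambda>j'. int (h (x j' 0))"] by simp
    have "(int (?A mod n) - ?B) mod int n = (int ?A - ?B) mod int n"
      by (simp add: zmod_int mod_diff_left_eq)
    also have "\<dots> = int (h (x j 0))" using sumA h_lt[of "x j 0"] by simp
    finally have key: "(int (?A mod n) - ?B) mod int n = int (h (x j 0))" .
    have "D i (restr_cw (E x) (R i)) (restr_msgs x (K i \<inter> S) 1) j k
        = hinv (nat ((int (h (E x q)) - (\<Sum>j'\<in>idx q - {j}. int (h (restr_msgs x (K i \<inter> S) 1 j' 0)))) mod int n))"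
      using qR by (simp add: D_def q_def restr_cw_def)
    also have "(\<Sum>j'\<in>idx q - {j}. int (h (restr_msgs x (K i \<inter> S) 1 j' 0))) = ?B"
      using others by (intro sum.cong) auto
    also have "hinv (nat ((int (h (E x q)) - ?B) mod int n)) = x j 0"
      using key hE hinv_h by simp
    finally show "D i (restr_cw (E x) (R i)) (restr_msgs x (K i \<inter> S) 1) j k = x j k"
      using k by simp
  qed
  have loc: "locality_le S 1 R 1"
    unfolding locality_le_def
  proof (intro ballI impI)
    fix i assume i: "i \<in> receivers" and ne: "W i \<inter> S \<noteq> {}"
    define f where "f = (\<lambda>q. SOME j. j \<in> idx q \<inter> W i)"
    have f: "\<And>q. q \<in> R i \<Longrightarrow> f q \<in> idx q \<inter> W i"
      unfolding f_def R_def by (rule someI_ex) auto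
    have inj: "inj_on f (R i)"
    proof (rule inj_onI)
      fix q q' assume "q \<in> R i" "q' \<in> R i" "f q = f q'"
      then show "q = q'" using f[of q] f[of q'] uniq[of q q' "f q"] by (auto simp: R_def)
    qed
    have "f ` R i \<subseteq> W i \<inter> S" using f idxS by (force simp: R_def)
    then have "card (R i) \<le> card (W i \<inter> S)"
      using card_inj_on_le[OF inj] W_fin by blast
    moreover have "card (W i \<inter> S) > 0" using ne W_fin by (simp add: card_gt_0_iff)
    ultimately show "real (card (R i)) / (real 1 * real (card (W i \<inter> S))) \<le> 1"
      by simp
  qed
  show ?thesis using valid[unfolded l_def cP] loc by blast
qed


theorem theorem6:
  assumes "card (UNIV :: 'a::finite set) \<ge> 2"
    and "S \<subseteq> {1..12::nat}"
  shows "beta_star TYPE('a) S 1 = real (clique_cover_number S)"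
proof -
  have finS: "finite S" using assms(2) finite_subset by blast
  let ?Q = "{real l / real m | l m. m \<ge> 1 \<and>
      (\<exists>(E :: (nat \<Rightarrow> nat \<Rightarrow> 'a) \<Rightarrow> (nat \<Rightarrow> 'a)) R D.
          valid_code S m l E R D \<and> locality_le S m R 1)}"
  have "Inf ?Q = real (clique_cover_number S)"
  proof (rule cInf_eq_minimum)
    obtain E :: "(nat \<Rightarrow> nat \<Rightarrow> 'a) \<Rightarrow> (nat \<Rightarrow> 'a)" and R D where
      "valid_code S 1 (clique_cover_number S) E R D \<and> locality_le S 1 R 1"
      using upper[OF finS] by blast
    then have "real (clique_cover_number S) / real (1::nat) \<in> ?Q" by blast
    then show "real (clique_cover_number S) \<in> ?Q" by simp
  next
    fix y assume "y \<in> ?Q"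
    then obtain l m and E :: "(nat \<Rightarrow> nat \<Rightarrow> 'a) \<Rightarrow> (nat \<Rightarrow> 'a)" and R D where
      y: "y = real l / real m" and m: "m \<ge> 1" and v: "valid_code S m l E R D"
      and loc: "locality_le S m R 1" by blast
    have "m * clique_cover_number S \<le> l" by (rule lower[OF v loc m assms(1,2)])
    then have "real m * real (clique_cover_number S) \<le> real l"
      by (metis of_nat_le_iff of_nat_mult)
    then show "real (clique_cover_number S) \<le> y"
      using m by (simp add: y le_divide_eq mult.commute)
  qed
  then show ?thesis unfolding beta_star_def .
qed

end
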